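(* Let $\mathcal N$ be a network and $T\ge1$. A nonnegative vector $R\in[0,\infty)^{\mathcal L}$ belongs to $\mathcal R^{(\mathcal M_T,\mathcal E_T)}$ if and only if there exists $R'\in\mathrm{conv}\{R_C: C\in\mathrm{cycle}^*(\mathcal M_T,\mathcal E_T)\}$ with $R\preccurlyeq R'$.
   Context: A network is a triple $\mathcal N=(\mathcal L,\mathcal I,D_{\mathcal L})$ where $\mathcal L$ is a finite nonempty set of links, each $\mathcal I(l)$ is a collection of nonempty subsets of $\mathcal L$, and $D_{\mathcal L}$ assigns an integer $D_{\mathcal L}(l,l')$ to every pair with $l'\in\phi$ for some $\phi\in\mathcal I(l)$. A schedule is a map $S:\mathcal L\times\mathbb Z\to\{0,1\}$; $S(l,t)$ has a collision if there is $\phi\in\mathcal I(l)$ with $S(l',t+D_{\mathcal L}(l,l'))=1$ for all $l'\in\phi$; $S$ is collision free if no $(l,t)$ with $S(l,t)=1$ has a collision. $S[T,k]$ is the $|\mathcal L|\times T$ binary matrix with $S[T,k](l,j)=S(l,kT+j)$. The scheduling graph $(\mathcal M_T,\mathcal E_T)$ has vertex set $\mathcal M_T$ = all $|\mathcal L|\times T$ binary matrices $A$ with $A=S[T,0]$ for some collision-free $S$, and edge set $\mathcal E_T$ = all pairs $(A,B)$ with $A=S[T,0]$, $B=S[T,1]$ for some collision-free $S$. A cycle is a sequence $(A_0,\dots,A_k)$, $k\ge1$, with $(A_i,A_{i+1})\in\mathcal E_T$, $A_k=A_0$, and $A_0,\dots,A_{k-1}$ pairwise distinct; its rate vector is $R_C=\frac{1}{kT}\sum_{i=0}^{k-1}A_i\mathbf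 1$ ($\mathbf 1$ the all-ones vector of length $T$). $\mathcal R^{(\mathcal M_T,\mathcal E_T)}$ is the convex hull of the rate vectors of all cycles. For two sequences of matrices of the same length, $(A_0,\dots,A_k)\succcurlyeq(B_0,\dots,B_k)$ means $A_i\succcurlyeq B_i$ entrywise for all $i$. $\mathrm{cycle}^*(\mathcal M_T,\mathcal E_T)$ (the maximal cycles) is the set of cycles $C$ such that there is no cycle $C'\neq C$ of the same length with $C'\succcurlyeq C$. The relation $R\preccurlyeq R'$ on vectors is entrywise. *)

theory Defs
  imports "HOL-Analysis.Analysis"
begin

text \<open>Links are the elements of a finite type 'l (so the link set is UNIV, finite and nonempty).
  A network is given by the interference map I :: 'l => 'l set set and the delay map
  D :: 'l => 'l => int.  A schedule is S :: 'l => int => bool (True = 1).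
  An |L| x T binary matrix is represented as 'l => nat => bool, with all columns j >= T
  set to False (canonical representation).\<close>

type_synonym 'l sched = "'l \<Rightarrow> int \<Rightarrow> bool"
type_synonym 'l bmat = "'l \<Rightarrow> nat \<Rightarrow> bool"

definition has_collision :: "('l \<Rightarrow> 'l set set) \<Rightarrow> ('l \<Rightarrow> 'l \<Rightarrow> int) \<Rightarrow> 'l sched \<Rightarrow> 'l \<Rightarrow> int \<Rightarrow> bool" where
  "has_collision I D S l t \<longleftrightarrow> (\<exists>\<phi>\<in>I l. \<forall>l'\<in>\<phi>. S l' (t + D l l'))"

definition collision_free :: "('l \<Rightarrow> 'l set set) \<Rightarrow> ('l \<Rightarrow> 'l \<Rightarrow> int) \<Rightarrow> 'l sched \<Rightarrow> bool" where
  "collision_free I D S \<longleftrightarrow> (\<forall>l t. S l t \<longrightarrow> \<not> has_collision I D S l t)"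

definition block :: "nat \<Rightarrow> int \<Rightarrow> 'l sched \<Rightarrow> 'l bmat" where
  "block T k S = (\<lambda>l j. j < T \<and> S l (k * int T + int j))"

definition sched_vertices :: "('l \<Rightarrow> 'l set set) \<Rightarrow> ('l \<Rightarrow> 'l \<Rightarrow> int) \<Rightarrow> nat \<Rightarrow> 'l bmat set" where
  "sched_vertices I D T = {block T 0 S | S. collision_free I D S}"

definition sched_edges :: "('l \<Rightarrow> 'l set set) \<Rightarrow> ('l \<Rightarrow> 'l \<Rightarrow> int) \<Rightarrow> nat \<Rightarrow> ('l bmat \<times> 'l bmat) set" where
  "sched_edges I D T = {(block T 0 S, block T 1 S) | S. collision_free I D S}"

text \<open>A cycle (A_0,...,A_k), k >= 1, is the list [A_0,...,A_k].\<close>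
definition is_cycle :: "('l \<Rightarrow> 'l set set) \<Rightarrow> ('l \<Rightarrow> 'l \<Rightarrow> int) \<Rightarrow> nat \<Rightarrow> 'l bmat list \<Rightarrow> bool" where
  "is_cycle I D T C \<longleftrightarrow> length C \<ge> 2
     \<and> (\<forall>i. i + 1 < length C \<longrightarrow> (C ! i, C ! (i + 1)) \<in> sched_edges I D T)
     \<and> last C = hd C \<and> distinct (butlast C)"

definition cycle_rate :: "nat \<Rightarrow> 'l bmat list \<Rightarrow> real ^ 'l::finite" where
  "cycle_rate T C = (\<chi> l. (1 / (real (length C - 1) * real T)) *
      (\<Sum>i<length C - 1. \<Sum>j<T. if (C ! i) l j then 1 else 0))"

definition rate_region :: "('l::finite \<Rightarrow> 'l set set) \<Rightarrow> ('l \<Rightarrow> 'l \<Rightarrow> int) \<Rightarrow> nat \<Rightarrow> (real ^ 'l) set" where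
  "rate_region I D T = convex hull {cycle_rate T C | C. is_cycle I D T C}"

definition seq_geq :: "'l bmat list \<Rightarrow> 'l bmat list \<Rightarrow> bool" where
  "seq_geq C' C \<longleftrightarrow> length C' = length C \<and>
     (\<forall>i < length C. \<forall>l j. (C ! i) l j \<longrightarrow> (C' ! i) l j)"

definition max_cycles :: "('l \<Rightarrow> 'l set set) \<Rightarrow> ('l \<Rightarrow> 'l \<Rightarrow> int) \<Rightarrow> nat \<Rightarrow> 'l bmat list set" where
  "max_cycles I D T = {C. is_cycle I D T C \<and>
     \<not> (\<exists>C'. is_cycle I D T C' \<and> C' \<noteq> C \<and> length C' = length C \<and> seq_geq C' C)}"

end

theory Submission imports Defs begin

definition cnt :: "nat \<Rightarrow> 'l bmat \<Rightarrow> 'l \<Rightarrow> real" where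
  "cnt T A l = (\<Sum>j<T. if A l j then 1 else 0)"

definition wrate :: "nat \<Rightarrow> 'l bmat list \<Rightarrow> real ^ 'l::finite" where
  "wrate T xs = (\<chi> l. (1 / (real (length xs) * real T)) * sum_list (map (\<lambda>A. cnt T A l) xs))"

definition cwalk :: "('l \<Rightarrow> 'l set set) \<Rightarrow> ('l \<Rightarrow> 'l \<Rightarrow> int) \<Rightarrow> nat \<Rightarrow> 'l bmat list \<Rightarrow> bool" where
  "cwalk I D T xs \<longleftrightarrow> xs \<noteq> [] \<and> successively (\<lambda>a b. (a,b) \<in> sched_edges I D T) (xs @ [hd xs])"

lemma sum_list_map_nth: "sum_list (map f xs) = (\<Sum>i<length xs. f (xs ! i))"
proof -
  have "sum_list (map f xs) = (\<Sum>i=0..<length xs. map f xs ! i)"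
    using sum_list_sum_nth[of "map f xs"] by simp
  also have "\<dots> = (\<Sum>i<length xs. f (xs ! i))"
    by (auto simp: atLeast0LessThan intro!: sum.cong)
  finally show ?thesis .
qed

lemma cycle_rate_wrate:
  assumes "xs \<noteq> []"
  shows "cycle_rate T (xs @ [hd xs]) = wrate T xs"
proof -
  have "(\<Sum>i<length (xs @ [hd xs]) - 1. g ((xs @ [hd xs]) ! i)) = sum_list (map g xs)" for g :: "'a bmat \<Rightarrow> real"
  proof -
    have "(\<Sum>i<length (xs @ [hd xs]) - 1. g ((xs @ [hd xs]) ! i)) = (\<Sum>i<length xs. g (xs ! i))"
      by (auto simp: nth_append intro!: sum.cong)
    then show ?thesis by (simp add: sum_list_map_nth)
  qed
  note gen = this
  show ?thesis
    unfolding cycle_rate_def wrate_def cnt_def vec_eq_iff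
  proof (intro allI)
    fix l
    show "(\<chi> l. 1 / (real (length (xs @ [hd xs]) - 1) * real T) *
        (\<Sum>i<length (xs @ [hd xs]) - 1. \<Sum>j<T. if ((xs @ [hd xs]) ! i) l j then 1 else 0)) $ l =
      (\<chi> l. 1 / (real (length xs) * real T) * (\<Sum>A\<leftarrow>xs. \<Sum>j<T. if A l j then 1 else 0)) $ l"
      using gen[of "\<lambda>A. \<Sum>j<T. if A l j then 1 else 0"] by simp
  qed
qed

lemma is_cycle_cwalk:
  assumes c: "cwalk I D T xs" and d: "distinct xs"
  shows "is_cycle I D T (xs @ [hd xs])"
proof -
  have ne: "xs \<noteq> []" and s: "successively (\<lambda>a b. (a,b) \<in> sched_edges I D T) (xs @ [hd xs])"
    using c by (auto simp: cwalk_def)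
  show ?thesis unfolding is_cycle_def
  proof (intro conjI allI impI)
    show "2 \<le> length (xs @ [hd xs])" using ne by (cases xs) auto
  next
    fix i assume "i + 1 < length (xs @ [hd xs])"
    then show "((xs @ [hd xs]) ! i, (xs @ [hd xs]) ! (i + 1)) \<in> sched_edges I D T"
      using successively_nth[OF s, of i] by simp
  next
    show "last (xs @ [hd xs]) = hd (xs @ [hd xs])" using ne by simp
  next
    show "distinct (butlast (xs @ [hd xs]))" using d by simp
  qed
qed

lemma arith1:
  fixes n1 n2 t s1 s2 :: real
  assumes "n1 > 0" "n2 > 0" "t > 0"
  shows "1 / ((n1 + n2) * t) * (s1 + s2) = n1/(n1+n2) * (1 / (n1 * t) * s1) + n2/(n1+n2) * (1/(n2*t) * s2)"
proof -
  have "n1 + n2 > 0" using assms by simp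
  have a: "n1/(n1+n2) * (1 / (n1 * t) * s1) = s1 / ((n1+n2)*t)"
    using assms by (simp add: divide_simps)
  have b: "n2/(n1+n2) * (1 / (n2 * t) * s2) = s2 / ((n1+n2)*t)"
    using assms by (simp add: divide_simps)
  show ?thesis unfolding a b by (simp add: add_divide_distrib)
qed

lemma succ_infix: "successively P (u @ v @ w) \<Longrightarrow> successively P v"
  by (simp add: successively_append_iff)

lemma succ_join: "successively P (u @ [x]) \<Longrightarrow> successively P (x # v) \<Longrightarrow> successively P (u @ x # v)"
  by (induction u rule: induct_list012) auto

lemma cwalk_rate:
  assumes "cwalk I D T xs" "T \<ge> 1"
  shows "wrate T xs \<in> rate_region I D T"
  using assms
proof (induction xs rule: length_induct)
  case (1 xs)
  show ?case
  proof (cases "distinct xs")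
    case True
    then have "is_cycle I D T (xs @ [hd xs])" using 1 is_cycle_cwalk by blast
    moreover have "xs \<noteq> []" using 1 by (simp add: cwalk_def)
    ultimately show ?thesis unfolding rate_region_def
      by (metis (mono_tags, lifting) cycle_rate_wrate hull_inc mem_Collect_eq)
  next
    case False
    then obtain a x b c where xs: "xs = a @ [x] @ b @ [x] @ c"
      using not_distinct_decomp by blast
    define W1 where "W1 = x # b"
    define W2 where "W2 = a @ x # c"
    have s: "successively (\<lambda>a b. (a,b) \<in> sched_edges I D T) (xs @ [hd xs])"
      using 1 by (simp add: cwalk_def)
    have c1: "cwalk I D T W1"
      using succ_infix[of _ a "x # b @ [x]" "c @ [hd xs]"] s unfolding W1_def cwalk_def
      by (simp add: xs)
    have h2: "hd W2 = hd xs" unfolding xs W2_def by (cases a) auto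
    have p1: "successively (\<lambda>a b. (a,b) \<in> sched_edges I D T) (a @ [x])"
      using succ_infix[of _ "[]" "a @ [x]" "b @ [x] @ c @ [hd xs]"] s by (simp add: xs)
    have p2: "successively (\<lambda>a b. (a,b) \<in> sched_edges I D T) (x # c @ [hd xs])"
      using succ_infix[of _ "a @ [x] @ b" "x # c @ [hd xs]" "[]"] s by (simp add: xs)
    have c2: "cwalk I D T W2"
      using succ_join[OF p1 p2] unfolding cwalk_def h2 by (simp add: W2_def)
    have l1: "length W1 < length xs" "length W2 < length xs"
      unfolding xs W1_def W2_def by auto
    have r1: "wrate T W1 \<in> rate_region I D T" "wrate T W2 \<in> rate_region I D T"
      using 1(1) l1 c1 c2 1(3) by auto
    define n1 where "n1 = real (length W1)"
    define n2 where "n2 = real (length W2)"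
    have n: "real (length xs) = n1 + n2" unfolding n1_def n2_def xs W1_def W2_def by simp
    have pos: "n1 > 0" "n2 > 0" unfolding n1_def n2_def W1_def W2_def by auto
    have sl: "sum_list (map f xs) = sum_list (map f W1) + sum_list (map f W2)" for f :: "'a bmat \<Rightarrow> real"
      unfolding xs W1_def W2_def by simp
    have tpos: "real T > 0" using 1(3) by simp
    have eq: "wrate T xs = (n1 / (n1 + n2)) *\<^sub>R wrate T W1 + (n2 / (n1 + n2)) *\<^sub>R wrate T W2"
    proof (rule vec_eq_iff[THEN iffD2], intro allI)
      fix l
      show "wrate T xs $ l = ((n1 / (n1 + n2)) *\<^sub>R wrate T W1 + (n2 / (n1 + n2)) *\<^sub>R wrate T W2) $ l"
        using arith1[OF pos tpos] unfolding wrate_def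
        by (simp add: n sl n1_def[symmetric] n2_def[symmetric])
    qed
    have cvx: "convex (rate_region I D T)" unfolding rate_region_def by simp
    have "n1 + n2 > 0" using pos by simp
    then have u: "0 \<le> n1/(n1+n2)" "0 \<le> n2/(n1+n2)" "n1/(n1+n2) + n2/(n1+n2) = 1"
      using pos by (simp_all add: add_divide_distrib[symmetric])
    show ?thesis unfolding eq by (rule convexD[OF cvx r1 u])
  qed
qed

definition zl :: "'l \<Rightarrow> 'l bmat \<Rightarrow> 'l bmat" where
  "zl l A = (\<lambda>l' j. A l' j \<and> l' \<noteq> l)"

definition zero :: "'l \<Rightarrow> real ^ 'l::finite \<Rightarrow> real ^ 'l" where
  "zero l v = (\<chi> l'. if l' = l then 0 else v $ l')"

lemma edge_zl:
  assumes "(A,B) \<in> sched_edges I D T"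
  shows "(zl l A, zl l B) \<in> sched_edges I D T"
proof -
  obtain S where S: "A = block T 0 S" "B = block T 1 S" "collision_free I D S"
    using assms unfolding sched_edges_def by blast
  define S' where "S' = (\<lambda>l' t. S l' t \<and> l' \<noteq> l)"
  have "collision_free I D S'"
    using S(3) unfolding collision_free_def has_collision_def S'_def by blast
  moreover have "zl l A = block T 0 S'" "zl l B = block T 1 S'"
    unfolding S S'_def zl_def block_def by (auto simp: fun_eq_iff)
  ultimately show ?thesis unfolding sched_edges_def by blast
qed

lemma cwalk_zl: "cwalk I D T xs \<Longrightarrow> cwalk I D T (map (zl l) xs)"
proof -
  assume c: "cwalk I D T xs"
  then have ne: "xs \<noteq> []" by (simp add: cwalk_def)
  have "map (zl l) xs @ [hd (map (zl l) xs)] = map (zl l) (xs @ [hd xs])"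
    using ne by (simp add: hd_map)
  moreover have "successively (\<lambda>a b. (a,b) \<in> sched_edges I D T) (map (zl l) (xs @ [hd xs]))"
    unfolding successively_map
    using c unfolding cwalk_def
    by (auto elim: successively_mono intro: edge_zl)
  ultimately show ?thesis using ne unfolding cwalk_def by simp
qed

lemma cnt_zl: "cnt T (zl l A) l' = (if l' = l then 0 else cnt T A l')"
  unfolding cnt_def zl_def by simp

lemma wrate_zl: "wrate T (map (zl l) xs) = zero l (wrate T xs)"
  unfolding wrate_def zero_def vec_eq_iff
  by (simp add: cnt_zl o_def)

lemma linear_zero: "linear (zero l)"
  by (rule linearI) (simp_all add: zero_def vec_eq_iff)

lemma cycle_cwalk:
  assumes "is_cycle I D T C"
  shows "\<exists>xs. C = xs @ [hd xs] \<and> cwalk I D T xs \<and> distinct xs"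
proof -
  define xs where "xs = butlast C"
  have len: "length C \<ge> 2" and lh: "last C = hd C" and dist: "distinct xs"
    and ed: "\<forall>i. i + 1 < length C \<longrightarrow> (C ! i, C ! (i + 1)) \<in> sched_edges I D T"
    using assms by (auto simp: is_cycle_def xs_def)
  have "length xs \<ge> 1" unfolding xs_def using len by simp
  then have ne: "C \<noteq> []" "xs \<noteq> []" using len by auto
  have C1: "C = xs @ [last C]" unfolding xs_def using ne(1) by simp
  have "hd C = hd xs" using ne(2) by (subst C1) simp
  then have C: "C = xs @ [hd xs]" using C1 lh by simp
  have "successively (\<lambda>a b. (a,b) \<in> sched_edges I D T) C"
    unfolding successively_conv_nth using ed by simp
  then have "cwalk I D T xs" using ne(2) C unfolding cwalk_def by simp
  then show ?thesis using C dist by blast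
qed

lemma zero_region:
  assumes "v \<in> rate_region I D T" "T \<ge> 1"
  shows "zero l v \<in> rate_region I D T"
proof -
  let ?X = "{cycle_rate T C | C. is_cycle I D T C}"
  have "zero l ` ?X \<subseteq> rate_region I D T"
  proof
    fix y assume "y \<in> zero l ` ?X"
    then obtain C where C: "is_cycle I D T C" "y = zero l (cycle_rate T C)" by blast
    then obtain xs where xs: "C = xs @ [hd xs]" "cwalk I D T xs" "distinct xs"
      using cycle_cwalk by blast
    have "y = wrate T (map (zl l) xs)"
      using C xs by (simp add: cwalk_def wrate_zl cycle_rate_wrate)
    then show "y \<in> rate_region I D T"
      using cwalk_rate[OF cwalk_zl[OF xs(2)] assms(2)] by simp
  qed
  then have "convex hull (zero l ` ?X) \<subseteq> rate_region I D T"
    by (intro hull_minimal) (auto simp: rate_region_def)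
  then show ?thesis
    using assms(1) convex_hull_linear_image[OF linear_zero, of l ?X]
    unfolding rate_region_def by blast
qed

definition sc :: "'l \<Rightarrow> real \<Rightarrow> real ^ 'l::finite \<Rightarrow> real ^ 'l" where
  "sc l t v = (\<chi> l'. if l' = l then t * v $ l' else v $ l')"

lemma sc_region:
  assumes "v \<in> rate_region I D T" "T \<ge> 1" "0 \<le> t" "t \<le> 1"
  shows "sc l t v \<in> rate_region I D T"
proof -
  have eq: "sc l t v = t *\<^sub>R v + (1 - t) *\<^sub>R zero l v"
    unfolding sc_def zero_def vec_eq_iff by (simp add: algebra_simps)
  have "convex (rate_region I D T)" unfolding rate_region_def by simp
  then show ?thesis unfolding eq
    using convexD[of "rate_region I D T" v "zero l v" t "1 - t"] assms zero_region[OF assms(1,2)]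
    by simp
qed


lemma cycle_block:
  assumes "is_cycle I D T C" "i < length C" "(C ! i) l j"
  shows "j < T"
proof -
  have aux: "j < T" if "k + 1 < length C" "(C ! k) l j" for k
  proof -
    have "(C ! k, C ! (k + 1)) \<in> sched_edges I D T" using assms(1) that(1) by (simp add: is_cycle_def)
    then obtain S where "C ! k = block T 0 S" unfolding sched_edges_def by blast
    then show ?thesis using that(2) by (simp add: block_def)
  qed
  show ?thesis
  proof (cases "i + 1 < length C")
    case True then show ?thesis using aux assms(3) by blast
  next
    case False
    then have i: "i = length C - 1" using assms(2) by simp
    have len: "length C \<ge> 2" "last C = hd C" using assms(1) by (auto simp: is_cycle_def)
    have ne: "C \<noteq> []" using len by auto
    have "C ! i = last C" using i ne by (simp add: last_conv_nth)
    also have "\<dots> = C ! 0" using len(2) ne by (simp add: hd_conv_nth)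
    finally have "C ! i = C ! 0" .
    then show ?thesis using aux[of 0] assms(3) len by simp
  qed
qed

lemma seq_geq_trans: "seq_geq A B \<Longrightarrow> seq_geq B C \<Longrightarrow> seq_geq A C"
  unfolding seq_geq_def by auto

lemma rate_mono: "seq_geq C' C \<Longrightarrow> cycle_rate T C $ l \<le> cycle_rate T C' $ l"
  unfolding cycle_rate_def seq_geq_def
  by (auto intro!: divide_right_mono sum_mono)

lemma exists_max:
  fixes I :: "'l::finite \<Rightarrow> 'l set set"
  assumes "is_cycle I D T C0"
  shows "\<exists>C\<in>max_cycles I D T. seq_geq C C0"
proof -
  define n where "n = length C0"
  define P where "P = (\<lambda>C. is_cycle I D T C \<and> length C = n \<and> seq_geq C C0)"
  define St :: "'l bmat list \<Rightarrow> (nat \<times> 'l \<times> nat) set" where "St = (\<lambda>C. {(i,l,j). i < n \<and> j < T \<and> (C ! i) l j})"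
  define f where "f = (\<lambda>C. card (St C))"
  let ?U = "{..<n} \<times> (UNIV :: 'l set) \<times> {..<T}"
  have fin: "finite ?U" by simp
  have sub: "St C \<subseteq> ?U" for C unfolding St_def by auto
  have "P C0" unfolding P_def n_def seq_geq_def using assms by simp
  moreover have "\<forall>y. P y \<longrightarrow> f y < card ?U + 1"
    using card_mono[OF fin sub] unfolding f_def by (simp add: less_Suc_eq_le)
  ultimately obtain Cm where Cm: "P Cm" "\<forall>y. P y \<longrightarrow> f y \<le> f Cm"
    using Lattices_Big.ex_has_greatest_nat[of P C0 f] by blast
  have "Cm \<in> max_cycles I D T"
    unfolding max_cycles_def
  proof (intro CollectI conjI notI)
    show "is_cycle I D T Cm" using Cm unfolding P_def by simp
  next
    assume "\<exists>C'. is_cycle I D T C' \<and> C' \<noteq> Cm \<and> length C' = length Cm \<and> seq_geq C' Cm"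
    then obtain C' where C': "is_cycle I D T C'" "C' \<noteq> Cm" "length C' = length Cm" "seq_geq C' Cm"
      by blast
    have lenm: "length Cm = n" using Cm unfolding P_def by simp
    have "P C'" using C'(1,3) lenm seq_geq_trans[OF C'(4)] Cm(1) unfolding P_def by simp
    then have le: "f C' \<le> f Cm" using Cm by blast
    have "\<exists>i<n. C' ! i \<noteq> Cm ! i"
    proof (rule ccontr)
      assume "\<not> (\<exists>i<n. C' ! i \<noteq> Cm ! i)"
      then have "C' = Cm" using C'(3) lenm by (intro nth_equalityI) auto
      then show False using C'(2) by simp
    qed
    then obtain i where i: "i < n" "C' ! i \<noteq> Cm ! i" by blast
    have "\<exists>l j. (C' ! i) l j \<noteq> (Cm ! i) l j" using i(2) by (auto simp: fun_eq_iff)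
    then obtain l j where lj: "(C' ! i) l j \<noteq> (Cm ! i) l j" by blast
    have "(C' ! i) l j" "\<not> (Cm ! i) l j"
      using lj C'(4) i lenm unfolding seq_geq_def by auto
    moreover have "j < T" using cycle_block[OF C'(1)] i C'(3) lenm calculation(1) by simp
    ultimately have "(i,l,j) \<in> St C' - St Cm" using i unfolding St_def by auto
    moreover have "St Cm \<subseteq> St C'" using C'(4) lenm unfolding St_def seq_geq_def by auto
    ultimately have "St Cm \<subset> St C'" by blast
    then have "f Cm < f C'" unfolding f_def
      using psubset_card_mono[OF finite_subset[OF sub fin]] by blast
    then show False using le by simp
  qed
  then show ?thesis using Cm unfolding P_def by blast
qed

theorem theorem9:
  fixes I :: "'l::finite \<Rightarrow> 'l set set" and D :: "'l \<Rightarrow> 'l \<Rightarrow> int"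
    and T :: nat and R :: "real ^ 'l"
  assumes "\<forall>l. \<forall>\<phi>\<in>I l. \<phi> \<noteq> {}"
    and "T \<ge> 1"
    and "\<forall>l. R $ l \<ge> 0"
  shows "R \<in> rate_region I D T \<longleftrightarrow>
    (\<exists>R' \<in> convex hull {cycle_rate T C | C. C \<in> max_cycles I D T}. \<forall>l. R $ l \<le> R' $ l)"
proof
  let ?H = "convex hull {cycle_rate T C | C. C \<in> max_cycles I D T}"
  define P where "P = {x :: real ^ 'l. \<exists>R' \<in> ?H. \<forall>l. x $ l \<le> R' $ l}"
  assume R: "R \<in> rate_region I D T"
  have "{cycle_rate T C | C. is_cycle I D T C} \<subseteq> P"
  proof
    fix x assume "x \<in> {cycle_rate T C | C. is_cycle I D T C}"
    then obtain C where C: "is_cycle I D T C" "x = cycle_rate T C" by blast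
    obtain C' where C': "C' \<in> max_cycles I D T" "seq_geq C' C" using exists_max[OF C(1)] by blast
    have "cycle_rate T C' \<in> ?H" using C'(1) by (intro hull_inc) blast
    then show "x \<in> P" unfolding P_def using C(2) rate_mono[OF C'(2)] by blast
  qed
  moreover have "convex P"
    unfolding convex_def
  proof (intro ballI allI impI)
    fix x y :: "real ^ 'l" and u v :: real
    assume x: "x \<in> P" and y: "y \<in> P" and uv: "0 \<le> u" "0 \<le> v" "u + v = 1"
    obtain Rx where Rx: "Rx \<in> ?H" "\<forall>l. x $ l \<le> Rx $ l" using x unfolding P_def by blast
    obtain Ry where Ry: "Ry \<in> ?H" "\<forall>l. y $ l \<le> Ry $ l" using y unfolding P_def by blast
    have "u *\<^sub>R Rx + v *\<^sub>R Ry \<in> ?H"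
      using convexD[OF convex_convex_hull Rx(1) Ry(1)] uv by blast
    moreover have "\<forall>l. (u *\<^sub>R x + v *\<^sub>R y) $ l \<le> (u *\<^sub>R Rx + v *\<^sub>R Ry) $ l"
      using Rx(2) Ry(2) uv by (auto intro!: add_mono mult_left_mono)
    ultimately show "u *\<^sub>R x + v *\<^sub>R y \<in> P" unfolding P_def by blast
  qed
  ultimately have "rate_region I D T \<subseteq> P"
    unfolding rate_region_def by (rule hull_minimal)
  then show "\<exists>R' \<in> ?H. \<forall>l. R $ l \<le> R' $ l" using R unfolding P_def by blast
next
  assume "\<exists>R' \<in> convex hull {cycle_rate T C | C. C \<in> max_cycles I D T}. \<forall>l. R $ l \<le> R' $ l"
  then obtain R' where R': "R' \<in> convex hull {cycle_rate T C | C. C \<in> max_cycles I D T}"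
    "\<forall>l. R $ l \<le> R' $ l" by blast
  have "R' \<in> rate_region I D T"
    using R'(1) unfolding rate_region_def
    by (rule subsetD[OF hull_mono, rotated]) (auto simp: max_cycles_def)
  define \<mu> where "\<mu> = (\<lambda>l. if R' $ l = 0 then 0 else R $ l / R' $ l)"
  have mu: "0 \<le> \<mu> l \<and> \<mu> l \<le> 1" for l
  proof (cases "R' $ l = 0")
    case False
    have "0 \<le> R' $ l" using R'(2) assms(3) by (meson order_trans)
    then have "R' $ l > 0" using False by linarith
    then show ?thesis using False R'(2) assms(3) by (simp add: \<mu>_def divide_le_eq_1)
  qed (simp add: \<mu>_def)
  have gen: "(\<chi> l. if l \<in> F then \<mu> l * R' $ l else R' $ l) \<in> rate_region I D T" if "finite F" for F
    using that
  proof (induction F rule: finite_induct)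
    case empty
    then show ?case using \<open>R' \<in> rate_region I D T\<close> by simp
  next
    case (insert a F)
    have "(\<chi> l. if l \<in> insert a F then \<mu> l * R' $ l else R' $ l)
        = sc a (\<mu> a) (\<chi> l. if l \<in> F then \<mu> l * R' $ l else R' $ l)"
      using insert(2) unfolding sc_def vec_eq_iff by auto
    then show ?case using sc_region[OF insert(3) assms(2)] mu by simp
  qed
  have "R = (\<chi> l. if l \<in> UNIV then \<mu> l * R' $ l else R' $ l)"
  proof -
    have "R $ l = \<mu> l * R' $ l" for l
    proof (cases "R' $ l = 0")
      case True
      have "R $ l \<le> R' $ l" "0 \<le> R $ l" using R'(2) assms(3) by auto
      then show ?thesis using True by (simp add: \<mu>_def)
    qed (simp add: \<mu>_def)
    then show ?thesis by (simp add: vec_eq_iff)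
  qed
  then show "R \<in> rate_region I D T" using gen[of UNIV] by simp
qed

end
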